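(* Let $M$ nodes with capacities $C_1,\dots,C_M>0$ and $N$ classes with fixed loop-free routes be given as in the context, with external rates $r_n>0$ and mean loads $\rho_n>0$. For every $J\in\mathbb{Z}_+^N$, the system of equations \[ r^{n,J}_m=\begin{cases}0 & n\notin\mathcal{N}_m\\ r_n & p^n(m)=0\\ r^{n,J}_{p^n(m)}S^J_{p^n(m)} & \text{otherwise},\end{cases}\qquad \rho^{n,J}_m=\begin{cases}0 & n\notin\mathcal{N}_m\\ \rho_n & p^n(m)=0\\ \rho^{n,J}_{p^n(m)}S^J_{p^n(m)} & \text{otherwise},\end{cases} \] with \[ S^J_m=\frac{C_m}{\max\{C_m,\ \sum_{n\in\mathcal{N}_m}(J_n r^{n,J}_m+\rho^{n,J}_m)\}}, \] has a unique solution $(r^{n,J}_m,\rho^{n,J}_m)_{n,m}$. Furthermore, for fixed $J$, $r^{n,J}_m$ and $\rho^{n,J}_m$ are continuous functions of the parameters $(r_n)_n$ and $(\rho_n)_n$.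
   Context: Class $n\in\{1,\dots,N\}$ follows a fixed route $\pi^n=[\pi^n_1,\dots,\pi^n_{l_n}]$ of pairwise distinct nodes in $\{1,\dots,M\}$ (loop-free route). $\mathcal{N}_m=\{n:\pi^n_i=m\text{ for some }i\}$ is the set of classes passing through node $m$. For $n\in\mathcal{N}_m$, $p^n(m)=\pi^n_{i-1}$ if $m=\pi^n_i$ with $i\ge2$, and $p^n(m)=0$ if $m=\pi^n_1$. The network as a whole need not be feedforward. *)

theory Defs
  imports "HOL-Analysis.Analysis"
begin

text \<open>Nodes are 1..M, classes are 1..N.
  Solutions are pairs (R, P) of functions class => node => real, where
  R n m stands for r^{n,J}_m and P n m for rho^{n,J}_m.\<close>

definition classes_at :: "nat \<Rightarrow> (nat \<Rightarrow> nat list) \<Rightarrow> nat \<Rightarrow> nat set" where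
  "classes_at N route m = {n \<in> {1..N}. m \<in> set (route n)}"

definition pred_node :: "(nat \<Rightarrow> nat list) \<Rightarrow> nat \<Rightarrow> nat \<Rightarrow> nat" where
  "pred_node route n m =
     (let i = (LEAST i. i < length (route n) \<and> route n ! i = m)
      in if i = 0 then 0 else route n ! (i - 1))"

definition S_fac :: "nat \<Rightarrow> (nat \<Rightarrow> nat list) \<Rightarrow> (nat \<Rightarrow> real) \<Rightarrow> (nat \<Rightarrow> nat)
     \<Rightarrow> (nat \<Rightarrow> nat \<Rightarrow> real) \<Rightarrow> (nat \<Rightarrow> nat \<Rightarrow> real) \<Rightarrow> nat \<Rightarrow> real" where
  "S_fac N route C J R P m =
     C m / max (C m) (\<Sum>n\<in>classes_at N route m. real (J n) * R n m + P n m)"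

text \<open>The fixed-point system; values outside the index range are fixed to 0
  so that the solution is a well-defined object.\<close>
definition is_solution :: "nat \<Rightarrow> nat \<Rightarrow> (nat \<Rightarrow> nat list) \<Rightarrow> (nat \<Rightarrow> real)
     \<Rightarrow> (nat \<Rightarrow> real) \<Rightarrow> (nat \<Rightarrow> real) \<Rightarrow> (nat \<Rightarrow> nat)
     \<Rightarrow> (nat \<Rightarrow> nat \<Rightarrow> real) \<times> (nat \<Rightarrow> nat \<Rightarrow> real) \<Rightarrow> bool" where
  "is_solution M N route C r \<rho> J sol \<longleftrightarrow>
     (let R = fst sol; P = snd sol; S = S_fac N route C J R P in
      (\<forall>n m. (n \<notin> {1..N} \<or> m \<notin> {1..M}) \<longrightarrow> R n m = 0 \<and> P n m = 0) \<and>
      (\<forall>n\<in>{1..N}. \<forall>m\<in>{1..M}.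
         R n m = (if n \<notin> classes_at N route m then 0
                  else if pred_node route n m = 0 then r n
                  else R n (pred_node route n m) * S (pred_node route n m)) \<and>
         P n m = (if n \<notin> classes_at N route m then 0
                  else if pred_node route n m = 0 then \<rho> n
                  else P n (pred_node route n m) * S (pred_node route n m))))"

end

theory Submission
  imports Defs
begin



definition Hf :: "real \<Rightarrow> real" where "Hf x = x - 1 - ln x"
definition psi :: "real \<Rightarrow> real" where "psi q = 1/q - 1 + ln q"

lemma Hf_nonneg: "x > 0 \<Longrightarrow> Hf x \<ge> 0"
  using ln_le_minus_one[of x] by (simp add: Hf_def)

lemma psi_nonneg: "q > 0 \<Longrightarrow> psi q \<ge> 0"
  using ln_le_minus_one[of "1/q"] by (simp add: psi_def ln_div)

lemma psi_pos: "q > 0 \<Longrightarrow> q \<noteq> 1 \<Longrightarrow> psi q > 0"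
proof -
  assume q: "q > 0" "q \<noteq> 1"
  have "ln (1/q) \<le> 1/q - 1" using ln_le_minus_one[of "1/q"] q by simp
  moreover have "ln (1/q) \<noteq> 1/q - 1"
  proof
    assume "ln (1/q) = 1/q - 1"
    then have "1/q = 1" using ln_eq_minus_one[of "1/q"] q by simp
    then show False using q by simp
  qed
  ultimately show ?thesis using q by (simp add: psi_def ln_div)
qed

definition preW :: "nat list \<Rightarrow> nat \<Rightarrow> nat set" where
  "preW xs m = set (takeWhile (\<lambda>x. x \<noteq> m) xs)"
definition pp :: "(nat \<Rightarrow> real) \<Rightarrow> nat list \<Rightarrow> nat \<Rightarrow> real" where
  "pp S xs m = (\<Prod>j\<in>preW xs m. S j)"

lemma preW_Cons_self[simp]: "preW (x#xs) x = {}" by (simp add: preW_def)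
lemma preW_Cons_other: "m \<noteq> x \<Longrightarrow> preW (x#xs) m = insert x (preW xs m)"
  by (simp add: preW_def)
lemma finite_preW[simp]: "finite (preW xs m)" by (simp add: preW_def)
lemma preW_subset: "preW xs m \<subseteq> set xs"
  by (auto simp: preW_def dest: set_takeWhileD)
lemma pp_Cons_self[simp]: "pp S (x#xs) x = 1" by (simp add: pp_def)
lemma pp_Cons_other: "m \<noteq> x \<Longrightarrow> x \<notin> set xs \<Longrightarrow> pp S (x#xs) m = S x * pp S xs m"
proof -
  assume "m \<noteq> x" "x \<notin> set xs"
  then have "x \<notin> preW xs m" using preW_subset by blast
  then show ?thesis using \<open>m \<noteq> x\<close> by (simp add: pp_def preW_Cons_other)
qed

lemma key_identity:
  fixes A B s t :: real
  assumes "A > 0" "B > 0" "s > 0" "t > 0"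
  shows "ln (s/t) * (A * s - B * t) + B * t*Hf (A/B) = A * s*psi (s/t) + B * t*Hf ((A * s)/(B * t))"
proof -
  have l: "ln ((A * s)/(B * t)) = ln (A/B) + ln (s/t)"
    using assms by (simp add: ln_div ln_mult)
  have e1: "A * s * (t/s) = A * t" using assms by simp
  have e2: "B * t * ((A * s)/(B * t)) = A * s" using assms by simp
  have e3: "B * t * (A/B) = A * t" using assms by simp
  show ?thesis unfolding Hf_def psi_def l
    using e1 e2 e3 by (simp add: algebra_simps)
qed

lemma chain:
  assumes "distinct xs" "\<forall>j\<in>set xs. S j > 0 \<and> T j > 0 \<and> T j \<le> 1"
    "A > 0" "B > 0" "W \<ge> B"
  shows "(\<Sum>m\<in>set xs. A * pp S xs m * S m * psi (S m / T m))
     \<le> (\<Sum>m\<in>set xs. ln (S m / T m) * (A * pp S xs m * S m - B * pp T xs m * T m)) + W * Hf (A/B)"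
  using assms
proof (induction xs arbitrary: A B W)
  case Nil
  then show ?case using Hf_nonneg[of "A/B"] by simp
next
  case (Cons x xs)
  have x: "S x > 0" "T x > 0" "T x \<le> 1" using Cons.prems by auto
  have nx: "x \<notin> set xs" using Cons.prems by simp
  have IH: "(\<Sum>m\<in>set xs. (A*S x) * pp S xs m * S m * psi (S m / T m))
     \<le> (\<Sum>m\<in>set xs. ln (S m / T m) * ((A*S x) * pp S xs m * S m - (B*T x) * pp T xs m * T m))
        + (B*T x) * Hf ((A*S x)/(B*T x))"
    using Cons.IH[of "A*S x" "B*T x" "B*T x"] Cons.prems x by auto
  have e1: "(\<Sum>m\<in>set xs. A * pp S (x#xs) m * S m * psi (S m / T m))
      = (\<Sum>m\<in>set xs. (A*S x) * pp S xs m * S m * psi (S m / T m))" (is "sum ?f _ = sum ?g _")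
  proof (rule sum.cong[OF refl])
    fix m assume "m \<in> set xs"
    then have "m \<noteq> x" using nx by auto
    then show "?f m = ?g m" using nx by (simp add: pp_Cons_other)
  qed
  have e2: "(\<Sum>m\<in>set xs. ln (S m / T m) * (A * pp S (x#xs) m * S m - B * pp T (x#xs) m * T m))
      = (\<Sum>m\<in>set xs. ln (S m / T m) * ((A*S x) * pp S xs m * S m - (B*T x) * pp T xs m * T m))" (is "sum ?f _ = sum ?g _")
  proof (rule sum.cong[OF refl])
    fix m assume "m \<in> set xs"
    then have "m \<noteq> x" using nx by auto
    then show "?f m = ?g m" using nx by (simp add: pp_Cons_other)
  qed
  have kid: "ln (S x/T x) * (A*S x - B*T x) + B*T x*Hf (A/B) = A*S x*psi (S x/T x) + B*T x*Hf ((A*S x)/(B*T x))"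
    using key_identity[of A B "S x" "T x"] Cons.prems x by simp
  have "B*T x*Hf (A/B) \<le> W * Hf (A/B)"
  proof (rule mult_right_mono)
    have "B * T x \<le> B" using Cons.prems x by (simp add: mult_le_cancel_left1)
    then show "B * T x \<le> W" using Cons.prems by linarith
    show "0 \<le> Hf (A/B)" using Hf_nonneg Cons.prems by simp
  qed
  note hb = this
  have s1: "(\<Sum>m\<in>set (x#xs). A * pp S (x#xs) m * S m * psi (S m / T m))
     = A * S x * psi (S x / T x) + (\<Sum>m\<in>set xs. A * pp S (x#xs) m * S m * psi (S m / T m))"
    using nx by simp
  have s2: "(\<Sum>m\<in>set (x#xs). ln (S m / T m) * (A * pp S (x#xs) m * S m - B * pp T (x#xs) m * T m))
     = ln (S x / T x) * (A * S x - B * T x) + (\<Sum>m\<in>set xs. ln (S m / T m) * (A * pp S (x#xs) m * S m - B * pp T (x#xs) m * T m))"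
    using nx by simp
  show ?case unfolding s1 s2 e1 e2 using IH kid hb by linarith
qed

locale net =
  fixes M N :: nat and route :: "nat \<Rightarrow> nat list" and C :: "nat \<Rightarrow> real"
  assumes C_pos: "\<forall>m\<in>{1..M}. C m > 0"
    and routes: "\<forall>n\<in>{1..N}. route n \<noteq> [] \<and> distinct (route n) \<and> set (route n) \<subseteq> {1..M}"
begin

definition load :: "(nat \<Rightarrow> real) \<Rightarrow> (nat \<Rightarrow> real) \<Rightarrow> nat \<Rightarrow> real" where
  "load a S m = (\<Sum>n\<in>classes_at N route m. a n * pp S (route n) m)"
definition Fm :: "(nat \<Rightarrow> real) \<Rightarrow> (nat \<Rightarrow> real) \<Rightarrow> nat \<Rightarrow> real" where
  "Fm a S m = C m / max (C m) (load a S m)"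
definition sol :: "nat set \<Rightarrow> (nat \<Rightarrow> real) \<Rightarrow> (nat \<Rightarrow> real) \<Rightarrow> (nat \<Rightarrow> real) \<Rightarrow> bool" where
  "sol A a \<sigma> S \<longleftrightarrow> (\<forall>m\<in>{1..M}. S m = (if m \<in> A then Fm a S m else \<sigma> m))"
definition valid :: "nat set \<Rightarrow> (nat \<Rightarrow> real) \<Rightarrow> (nat \<Rightarrow> real) \<Rightarrow> bool" where
  "valid A a \<sigma> \<longleftrightarrow> (\<forall>n\<in>{1..N}. a n > 0) \<and> (\<forall>m\<in>{1..M}-A. 0 < \<sigma> m \<and> \<sigma> m \<le> 1)"

lemma classes_at_sub: "classes_at N route m \<subseteq> {1..N}"
  by (auto simp: classes_at_def)
lemma finite_classes_at[simp]: "finite (classes_at N route m)"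
  by (rule finite_subset[OF classes_at_sub]) simp
lemma route_sub: "n \<in> {1..N} \<Longrightarrow> set (route n) \<subseteq> {1..M}"
  using routes by blast
lemma route_distinct: "n \<in> {1..N} \<Longrightarrow> distinct (route n)"
  using routes by blast
lemma preW_route_sub: "n \<in> {1..N} \<Longrightarrow> preW (route n) m \<subseteq> {1..M}"
  using route_sub preW_subset by blast

lemma pp_bounds:
  assumes "n \<in> {1..N}" "\<forall>j\<in>{1..M}. 0 < S j \<and> S j \<le> 1"
  shows "0 < pp S (route n) m \<and> pp S (route n) m \<le> 1"
proof -
  have "\<forall>j\<in>preW (route n) m. 0 < S j \<and> S j \<le> 1" using assms preW_route_sub by blast
  then show ?thesis unfolding pp_def
    by (auto intro!: prod_pos prod_le_1)
qed

lemma load_nonneg: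
  assumes "\<forall>n\<in>{1..N}. a n \<ge> 0" "\<forall>j\<in>{1..M}. 0 < S j \<and> S j \<le> 1"
  shows "load a S m \<ge> 0"
  unfolding load_def using assms pp_bounds classes_at_sub
  by (intro sum_nonneg) (meson less_le mult_nonneg_nonneg subsetD)

lemma load_le:
  assumes "\<forall>n\<in>{1..N}. a n \<ge> 0" "\<forall>j\<in>{1..M}. 0 < S j \<and> S j \<le> 1"
  shows "load a S m \<le> (\<Sum>n\<in>{1..N}. a n)"
proof -
  have "load a S m \<le> (\<Sum>n\<in>classes_at N route m. a n)"
    unfolding load_def
  proof (rule sum_mono)
    fix n assume "n \<in> classes_at N route m"
    then have n: "n \<in> {1..N}" using classes_at_sub by blast
    then show "a n * pp S (route n) m \<le> a n"
      using pp_bounds[OF n assms(2), of m] assms(1) by (simp add: mult_left_le)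
  qed
  also have "\<dots> \<le> (\<Sum>n\<in>{1..N}. a n)"
    by (rule sum_mono2) (use classes_at_sub assms(1) in auto)
  finally show ?thesis .
qed

lemma Fm_bounds:
  assumes "m \<in> {1..M}"
  shows "0 < Fm a S m \<and> Fm a S m \<le> 1"
proof -
  have c: "C m > 0" using C_pos assms by blast
  have "max (C m) (load a S m) \<ge> C m" by simp
  then show ?thesis unfolding Fm_def using c by (auto simp: divide_le_eq_1)
qed

lemma sol_bounds:
  assumes "sol A a \<sigma> S" "valid A a \<sigma>"
  shows "\<forall>m\<in>{1..M}. 0 < S m \<and> S m \<le> 1"
  using assms Fm_bounds unfolding sol_def valid_def by (metis Diff_iff)

lemma Fm_mult_le: "m \<in> {1..M} \<Longrightarrow> L \<ge> 0 \<Longrightarrow> C m / max (C m) L * L \<le> C m"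
proof -
  assume m: "m \<in> {1..M}" and L: "L \<ge> 0"
  have c: "C m > 0" using C_pos m by blast
  show ?thesis
  proof (cases "L \<le> C m")
    case True then show ?thesis using c L by (simp add: max_def)
  next
    case False then show ?thesis using c by (simp add: max_def)
  qed
qed

lemma node_sign:
  assumes "sol A a \<sigma> S" "valid A a \<sigma>" "sol A b \<tau> T" "valid A b \<tau>" "m \<in> A" "A \<subseteq> {1..M}"
  shows "ln (S m / T m) * (S m * load a S m - T m * load b T m) \<le> 0"
proof -
  have m: "m \<in> {1..M}" using assms by blast
  have Sb: "\<forall>j\<in>{1..M}. 0 < S j \<and> S j \<le> 1" and Tb: "\<forall>j\<in>{1..M}. 0 < T j \<and> T j \<le> 1"
    using sol_bounds assms by blast+
  have La: "load a S m \<ge> 0" using assms(2) unfolding valid_def by (intro load_nonneg[OF _ Sb]) (simp add: less_imp_le)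
  have Lb: "load b T m \<ge> 0" using assms(4) unfolding valid_def by (intro load_nonneg[OF _ Tb]) (simp add: less_imp_le)
  have Sm: "S m = C m / max (C m) (load a S m)" using assms(1) m assms(5) unfolding sol_def Fm_def by auto
  have Tm: "T m = C m / max (C m) (load b T m)" using assms(3) m assms(5) unfolding sol_def Fm_def by auto
  have Cm: "C m > 0" using C_pos m by blast
  have SL: "S m * load a S m \<le> C m" using Fm_mult_le[OF m La] Sm by simp
  have TL: "T m * load b T m \<le> C m" using Fm_mult_le[OF m Lb] Tm by simp
  have pS: "S m > 0" "S m \<le> 1" and pT: "T m > 0" "T m \<le> 1" using Sb Tb m by auto
  consider "S m > T m" | "S m < T m" | "S m = T m" by linarith
  then show ?thesis
  proof cases
    case 1
    then have "T m < 1" using pS by linarith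
    then have "load b T m > C m" using Tm Cm by (auto simp: max_def split: if_splits)
    then have "T m * load b T m = C m" using Tm Cm by (simp add: max_def)
    moreover have "ln (S m / T m) > 0" using 1 pT by simp
    ultimately show ?thesis using SL by (simp add: mult_le_0_iff)
  next
    case 2
    then have "S m < 1" using pT by linarith
    then have "load a S m > C m" using Sm Cm by (auto simp: max_def split: if_splits)
    then have "S m * load a S m = C m" using Sm Cm by (simp add: max_def)
    moreover have "ln (S m / T m) < 0" using 2 pS pT by simp
    ultimately show ?thesis using TL by (simp add: mult_le_0_iff)
  next
    case 3
    then show ?thesis using pT by simp
  qed
qed

lemma sum_swap_routes:
  "(\<Sum>n\<in>{1..N}. \<Sum>m\<in>set (route n). f n m) = (\<Sum>m\<in>{1..M}. \<Sum>n\<in>classes_at N route m. f n m)"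
proof -
  have "(\<Sum>n\<in>{1..N}. \<Sum>m\<in>set (route n). f n m) = (\<Sum>n\<in>{1..N}. \<Sum>m\<in>{m. m \<in> {1..M} \<and> m \<in> set (route n)}. f n m)"
  proof (rule sum.cong[OF refl])
    fix n assume "n \<in> {1..N}"
    then have "{m. m \<in> {1..M} \<and> m \<in> set (route n)} = set (route n)" using route_sub by blast
    then show "(\<Sum>m\<in>set (route n). f n m) = (\<Sum>m\<in>{m. m \<in> {1..M} \<and> m \<in> set (route n)}. f n m)" by simp
  qed
  also have "\<dots> = (\<Sum>m\<in>{1..M}. \<Sum>n\<in>{n. n \<in> {1..N} \<and> m \<in> set (route n)}. f n m)"
    by (rule sum.swap_restrict) auto
  also have "\<dots> = (\<Sum>m\<in>{1..M}. \<Sum>n\<in>classes_at N route m. f n m)"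
    by (simp add: classes_at_def)
  finally show ?thesis .
qed

lemma stability:
  assumes "sol A a \<sigma> S" "valid A a \<sigma>" "sol A b \<tau> T" "valid A b \<tau>" "A \<subseteq> {1..M}"
  shows "(\<Sum>n\<in>{1..N}. \<Sum>m\<in>set (route n). a n * pp S (route n) m * S m * psi (S m / T m))
     \<le> (\<Sum>n\<in>{1..N}. b n * Hf (a n / b n))
       + (\<Sum>m\<in>{1..M}-A. ln (S m / T m) * (S m * load a S m - T m * load b T m))"
proof -
  have Sb: "\<forall>j\<in>{1..M}. 0 < S j \<and> S j \<le> 1" and Tb: "\<forall>j\<in>{1..M}. 0 < T j \<and> T j \<le> 1"
    using sol_bounds assms by blast+
  have ap: "\<forall>n\<in>{1..N}. a n > 0" and bp: "\<forall>n\<in>{1..N}. b n > 0" using assms(2,4) unfolding valid_def by auto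
  define g where "g m = ln (S m / T m) * (S m * load a S m - T m * load b T m)" for m
  have "(\<Sum>n\<in>{1..N}. \<Sum>m\<in>set (route n). a n * pp S (route n) m * S m * psi (S m / T m))
     \<le> (\<Sum>n\<in>{1..N}. (\<Sum>m\<in>set (route n). ln (S m / T m) * (a n * pp S (route n) m * S m - b n * pp T (route n) m * T m)) + b n * Hf (a n / b n))"
  proof (rule sum_mono)
    fix n assume n: "n \<in> {1..N}"
    show "(\<Sum>m\<in>set (route n). a n * pp S (route n) m * S m * psi (S m / T m))
     \<le> (\<Sum>m\<in>set (route n). ln (S m / T m) * (a n * pp S (route n) m * S m - b n * pp T (route n) m * T m)) + b n * Hf (a n / b n)"
    proof (rule chain)
      show "\<forall>j\<in>set (route n). 0 < S j \<and> 0 < T j \<and> T j \<le> 1"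
        using route_sub[OF n] Sb Tb by blast
    qed (use n route_distinct ap bp in auto)
  qed
  also have "\<dots> = (\<Sum>n\<in>{1..N}. \<Sum>m\<in>set (route n). ln (S m / T m) * (a n * pp S (route n) m * S m - b n * pp T (route n) m * T m)) + (\<Sum>n\<in>{1..N}. b n * Hf (a n / b n))"
    by (simp add: sum.distrib)
  also have "(\<Sum>n\<in>{1..N}. \<Sum>m\<in>set (route n). ln (S m / T m) * (a n * pp S (route n) m * S m - b n * pp T (route n) m * T m))
     = (\<Sum>m\<in>{1..M}. g m)"
    unfolding sum_swap_routes g_def load_def
    by (simp add: sum_distrib_left sum_subtractf algebra_simps)
  also have "(\<Sum>m\<in>{1..M}. g m) = (\<Sum>m\<in>A. g m) + (\<Sum>m\<in>{1..M}-A. g m)"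
    using assms(5) by (metis add.commute finite_atLeastAtMost sum.subset_diff)
  also have "(\<Sum>m\<in>A. g m) \<le> 0"
    unfolding g_def using node_sign[OF assms(1-4) _ assms(5)] by (intro sum_nonpos) auto
  finally show ?thesis unfolding g_def by simp
qed

lemma uniqueness:
  assumes "sol A a \<sigma> S" "valid A a \<sigma>" "sol A a \<sigma> T" "A \<subseteq> {1..M}"
  shows "\<forall>m\<in>{1..M}. S m = T m"
proof
  fix m assume m: "m \<in> {1..M}"
  have Sb: "\<forall>j\<in>{1..M}. 0 < S j \<and> S j \<le> 1" and Tb: "\<forall>j\<in>{1..M}. 0 < T j \<and> T j \<le> 1"
    using sol_bounds assms by blast+
  have ap: "\<forall>n\<in>{1..N}. a n > 0" using assms(2) unfolding valid_def by auto
  have st: "(\<Sum>n\<in>{1..N}. \<Sum>m\<in>set (route n). a n * pp S (route n) m * S m * psi (S m / T m))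
     \<le> (\<Sum>n\<in>{1..N}. a n * Hf (a n / a n))
       + (\<Sum>m\<in>{1..M}-A. ln (S m / T m) * (S m * load a S m - T m * load a T m))"
    by (rule stability) (use assms in auto)
  have z1: "(\<Sum>n\<in>{1..N}. a n * Hf (a n / a n)) = 0"
    using ap by (intro sum.neutral) (simp add: Hf_def)
  have z2: "(\<Sum>m\<in>{1..M}-A. ln (S m / T m) * (S m * load a S m - T m * load a T m)) = 0"
  proof (intro sum.neutral ballI)
    fix j assume "j \<in> {1..M}-A"
    then have "T j > 0" using Tb by auto
    moreover have "S j = T j" using assms(1,3) \<open>j \<in> {1..M}-A\<close> unfolding sol_def by auto
    ultimately
    show "ln (S j / T j) * (S j * load a S j - T j * load a T j) = 0" by simp
  qed
  have tn: "\<And>n j. n \<in> {1..N} \<Longrightarrow> j \<in> set (route n) \<Longrightarrow> 0 \<le> a n * pp S (route n) j * S j * psi (S j / T j)"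
  proof -
    fix n j assume n: "n \<in> {1..N}" and j: "j \<in> set (route n)"
    then have "j \<in> {1..M}" using route_sub by blast
    then have "a n > 0" "S j > 0" "pp S (route n) j > 0" "psi (S j / T j) \<ge> 0"
      using ap n pp_bounds[OF n Sb, of j] Sb Tb psi_nonneg[of "S j / T j"] by auto
    then show "0 \<le> a n * pp S (route n) j * S j * psi (S j / T j)" by simp
  qed
  show "S m = T m"
  proof (cases "classes_at N route m = {}")
    case True
    then have "load a S m = 0" "load a T m = 0" by (simp_all add: load_def)
    moreover have "m \<in> A \<or> m \<notin> A" by blast
    ultimately show ?thesis using assms(1,3) m C_pos unfolding sol_def Fm_def by auto
  next
    case False
    then obtain n where n: "n \<in> {1..N}" "m \<in> set (route n)" unfolding classes_at_def by auto
    have "a n * pp S (route n) m * S m * psi (S m / T m) \<le> (\<Sum>j\<in>set (route n). a n * pp S (route n) j * S j * psi (S j / T j))"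
      by (rule member_le_sum) (use n tn in auto)
    also have "\<dots> \<le> (\<Sum>n\<in>{1..N}. \<Sum>j\<in>set (route n). a n * pp S (route n) j * S j * psi (S j / T j))"
      by (rule member_le_sum[where f="\<lambda>n. \<Sum>j\<in>set (route n). a n * pp S (route n) j * S j * psi (S j / T j)"])
         (use n tn in \<open>auto intro: sum_nonneg\<close>)
    finally have "a n * pp S (route n) m * S m * psi (S m / T m) \<le> 0" using st z1 z2 by linarith
    moreover have "a n * pp S (route n) m * S m > 0" using ap n pp_bounds[OF n(1) Sb, of m] Sb m by simp
    ultimately have "psi (S m / T m) \<le> 0"
      by (metis mult_pos_pos not_le)
    then have "S m / T m = 1" using psi_pos[of "S m / T m"] Sb Tb m by force
    then show ?thesis using Tb m by simp
  qed
qed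

end




lemma psi_mono_le1:
  assumes "0 < p" "p \<le> q" "q \<le> 1"
  shows "psi q \<le> psi p"
proof -
  have q: "q > 0" using assms by linarith
  have "ln q - ln p = ln (q/p)" using assms q by (simp add: ln_div)
  also have "\<dots> \<le> q/p - 1" using ln_le_minus_one[of "q/p"] assms q by simp
  finally have l: "ln q - ln p \<le> q/p - 1" .
  have "1/p - 1/q - (q/p - 1) = (q - p) / p * (1/q - 1)"
    using assms q by (simp add: field_simps)
  moreover have "(q - p) / p * (1/q - 1) \<ge> 0"
    using assms q by (intro mult_nonneg_nonneg) auto
  ultimately show ?thesis using l unfolding psi_def by linarith
qed

lemma psi_mono_ge1:
  assumes "1 \<le> p" "p \<le> q"
  shows "psi p \<le> psi q"
proof -
  have p: "p > 0" and q: "q > 0" using assms by linarith+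
  have "ln (p/q) \<le> p/q - 1" using ln_le_minus_one[of "p/q"] p q by simp
  moreover have "ln (p/q) = ln p - ln q" using p q by (simp add: ln_div)
  ultimately have l: "ln q - ln p \<ge> 1 - p/q" by linarith
  have "1/q - 1/p + (1 - p/q) = (q - p) / q * (1 - 1/p)"
    using p q by (simp add: field_simps)
  moreover have "(q - p) / q * (1 - 1/p) \<ge> 0"
    using assms p q by (intro mult_nonneg_nonneg) auto
  ultimately show ?thesis using l unfolding psi_def by linarith
qed

lemma psi_tendsto_imp:
  assumes lim: "((\<lambda>x. psi (q x)) \<longlongrightarrow> 0) F" and pos: "eventually (\<lambda>x. q x > 0) F"
  shows "(q \<longlongrightarrow> 1) F"
proof (rule tendstoI)
  fix e :: real assume e: "e > 0"
  define e' where "e' = min e (1/2)"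
  have e': "e' > 0" "e' \<le> e" "e' \<le> 1/2" using e by (auto simp: e'_def)
  define d where "d = min (psi (1 - e')) (psi (1 + e'))"
  have d: "d > 0" unfolding d_def using e' by (auto intro!: psi_pos)
  have "eventually (\<lambda>x. dist (psi (q x)) 0 < d) F" using tendstoD[OF lim d] .
  then show "eventually (\<lambda>x. dist (q x) 1 < e) F"
  proof (rule eventually_elim2[OF _ pos])
    fix x assume h: "dist (psi (q x)) 0 < d" and qp: "q x > 0"
    have ps: "psi (q x) < d" using h by simp
    have "\<not> q x \<le> 1 - e'"
    proof
      assume "q x \<le> 1 - e'"
      then have "psi (1 - e') \<le> psi (q x)" using qp e' by (intro psi_mono_le1) auto
      then show False using ps unfolding d_def by linarith
    qed
    moreover have "\<not> q x \<ge> 1 + e'"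
    proof
      assume "q x \<ge> 1 + e'"
      then have "psi (1 + e') \<le> psi (q x)" using e' by (intro psi_mono_ge1) auto
      then show False using ps unfolding d_def by linarith
    qed
    ultimately show "dist (q x) 1 < e" using e' by (simp add: dist_real_def abs_less_iff)
  qed
qed

lemma Hf_tendsto: "(g \<longlongrightarrow> 1) F \<Longrightarrow> ((\<lambda>x. Hf (g x)) \<longlongrightarrow> 0) F"
proof -
  assume g: "(g \<longlongrightarrow> 1) F"
  have "((\<lambda>x. g x - 1 - ln (g x)) \<longlongrightarrow> 1 - 1 - ln 1) F"
    by (intro tendsto_diff g tendsto_const tendsto_ln) simp
  then show ?thesis by (simp add: Hf_def)
qed

lemma abs_ln_tendsto: "((g::_\<Rightarrow>real) \<longlongrightarrow> 1) F \<Longrightarrow> ((\<lambda>x. \<bar>ln (g x)\<bar>) \<longlongrightarrow> 0) F"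
proof -
  assume g: "(g \<longlongrightarrow> 1) F"
  have "((\<lambda>x. \<bar>ln (g x)\<bar>) \<longlongrightarrow> \<bar>ln 1\<bar>) F"
    by (intro tendsto_rabs tendsto_ln g) simp
  then show ?thesis by simp
qed

context net begin

definition beta :: "nat set \<Rightarrow> (nat \<Rightarrow> real) \<Rightarrow> (nat \<Rightarrow> real) \<Rightarrow> nat \<Rightarrow> real" where
  "beta A a \<sigma> j = (if j \<in> A then C j / max (C j) (\<Sum>n\<in>{1..N}. a n) else \<sigma> j)"

lemma beta_pos:
  assumes "valid A a \<sigma>" "j \<in> {1..M}"
  shows "beta A a \<sigma> j > 0"
proof -
  have "C j > 0" using assms(2) C_pos by blast
  then show ?thesis using assms unfolding beta_def valid_def by (auto simp: max_def)
qed

lemma sol_lower: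
  assumes "sol A a \<sigma> S" "valid A a \<sigma>" "j \<in> {1..M}"
  shows "beta A a \<sigma> j \<le> S j"
proof (cases "j \<in> A")
  case True
  have Sb: "\<forall>i\<in>{1..M}. 0 < S i \<and> S i \<le> 1" using sol_bounds assms by blast
  have an: "\<forall>n\<in>{1..N}. a n \<ge> 0" using assms(2) unfolding valid_def by (auto simp: less_imp_le)
  have L: "load a S j \<le> (\<Sum>n\<in>{1..N}. a n)" using load_le[OF an Sb] .
  have c: "C j > 0" using C_pos assms(3) by blast
  have "C j / max (C j) (\<Sum>n\<in>{1..N}. a n) \<le> C j / max (C j) (load a S j)"
    using c L by (intro divide_left_mono) (auto simp: max_def)
  then show ?thesis using True assms(1,3) unfolding beta_def sol_def Fm_def by auto
next
  case False
  then show ?thesis using assms(1,3) unfolding beta_def sol_def by auto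
qed

lemma beta_tendsto:
  assumes ta: "\<forall>n\<in>{1..N}. ((\<lambda>x. a x n) \<longlongrightarrow> a0 n) F"
   and ts: "\<forall>j\<in>{1..M}-A. ((\<lambda>x. \<sigma> x j) \<longlongrightarrow> \<sigma>0 j) F"
   and j: "j \<in> {1..M}"
  shows "((\<lambda>x. beta A (a x) (\<sigma> x) j) \<longlongrightarrow> beta A a0 \<sigma>0 j) F"
proof (cases "j \<in> A")
  case True
  have c: "C j > 0" using C_pos j by blast
  have s: "((\<lambda>x. \<Sum>n\<in>{1..N}. a x n) \<longlongrightarrow> (\<Sum>n\<in>{1..N}. a0 n)) F"
    using ta by (intro tendsto_sum) auto
  have "((\<lambda>x. C j / max (C j) (\<Sum>n\<in>{1..N}. a x n)) \<longlongrightarrow> C j / max (C j) (\<Sum>n\<in>{1..N}. a0 n)) F"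
    using c by (intro tendsto_divide tendsto_const tendsto_max s) (auto simp: max_def)
  then show ?thesis using True unfolding beta_def by simp
next
  case False
  then show ?thesis using ts j unfolding beta_def by simp
qed

lemma cont_sol:
  assumes AV: "A \<subseteq> {1..M}"
   and ev: "eventually (\<lambda>x. sol A (a x) (\<sigma> x) (S x) \<and> valid A (a x) (\<sigma> x)) F"
   and T: "sol A a0 \<sigma>0 T" "valid A a0 \<sigma>0"
   and ta: "\<forall>n\<in>{1..N}. ((\<lambda>x. a x n) \<longlongrightarrow> a0 n) F"
   and ts: "\<forall>j\<in>{1..M}-A. ((\<lambda>x. \<sigma> x j) \<longlongrightarrow> \<sigma>0 j) F"
   and m: "m \<in> {1..M}"
  shows "((\<lambda>x. S x m) \<longlongrightarrow> T m) F"
proof -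
  have Tb: "\<forall>j\<in>{1..M}. 0 < T j \<and> T j \<le> 1" using sol_bounds T by blast
  have a0p: "\<forall>n\<in>{1..N}. a0 n > 0" using T(2) unfolding valid_def by auto
  show ?thesis
  proof (cases "m \<in> A")
    case False
    have "eventually (\<lambda>x. \<sigma> x m = S x m) F"
      using ev by eventually_elim (use False m in \<open>auto simp: sol_def\<close>)
    moreover have "T m = \<sigma>0 m" using T(1) False m by (auto simp: sol_def)
    moreover have "((\<lambda>x. \<sigma> x m) \<longlongrightarrow> \<sigma>0 m) F" using ts False m by simp
    ultimately show ?thesis using tendsto_cong[of "\<lambda>x. \<sigma> x m" "\<lambda>x. S x m" F "\<sigma>0 m"] by simp
  next
    case mA: True
    show ?thesis
    proof (cases "classes_at N route m = {}")
      case True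
      have c: "C m > 0" using C_pos m by blast
      have "eventually (\<lambda>x. 1 = S x m) F"
        using ev by eventually_elim (use True mA m c in \<open>auto simp: sol_def Fm_def load_def\<close>)
      moreover have "T m = 1" using T(1) True mA m c by (auto simp: sol_def Fm_def load_def)
      ultimately show ?thesis using tendsto_cong[of "\<lambda>x. 1" "\<lambda>x. S x m" F "1"] by simp
    next
      case False
      then obtain n where n: "n \<in> {1..N}" "m \<in> set (route n)" unfolding classes_at_def by auto
      define U where "U x = (\<Sum>n\<in>{1..N}. a0 n * Hf (a x n / a0 n))
          + (\<Sum>j\<in>{1..M}-A. \<bar>ln (\<sigma> x j / \<sigma>0 j)\<bar> * ((\<Sum>n\<in>{1..N}. a x n) + (\<Sum>n\<in>{1..N}. a0 n)))" for x
      define \<gamma> where "\<gamma> x = a x n * (\<Prod>j\<in>preW (route n) m. beta A (a x) (\<sigma> x) j) * beta A (a x) (\<sigma> x) m" for x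
      define \<gamma>0 where "\<gamma>0 = a0 n * (\<Prod>j\<in>preW (route n) m. beta A a0 \<sigma>0 j) * beta A a0 \<sigma>0 m"
      have pre: "preW (route n) m \<subseteq> {1..M}" using preW_route_sub n by blast
      have g0: "\<gamma>0 > 0" unfolding \<gamma>0_def using a0p n beta_pos[OF T(2)] m pre
        by (auto intro!: mult_pos_pos prod_pos)
      have gt: "(\<gamma> \<longlongrightarrow> \<gamma>0) F" unfolding \<gamma>_def \<gamma>0_def
        using ta n pre m by (intro tendsto_mult tendsto_prod beta_tendsto[OF ta ts]) auto
      have a0nz: "\<And>n. n \<in> {1..N} \<Longrightarrow> a0 n \<noteq> 0" using a0p by (metis less_irrefl)
      have s0nz: "\<And>j. j \<in> {1..M}-A \<Longrightarrow> \<sigma>0 j \<noteq> 0" using T(2) unfolding valid_def by (metis less_irrefl)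
      have Ut: "(U \<longlongrightarrow> 0) F"
      proof -
        have t1: "((\<lambda>x. \<Sum>n\<in>{1..N}. a0 n * Hf (a x n / a0 n)) \<longlongrightarrow> (\<Sum>n\<in>{1..N}. a0 n * 0)) F"
        proof (rule tendsto_sum)
          fix n assume n: "n \<in> {1..N}"
          have "((\<lambda>x. a x n / a0 n) \<longlongrightarrow> a0 n / a0 n) F" using ta n by (intro tendsto_divide) (auto simp: a0nz)
          then have "((\<lambda>x. a x n / a0 n) \<longlongrightarrow> 1) F" using a0nz[OF n] by simp
          then show "((\<lambda>x. a0 n * Hf (a x n / a0 n)) \<longlongrightarrow> a0 n * 0) F"
            by (intro tendsto_mult tendsto_const Hf_tendsto)
        qed
        have t2: "((\<lambda>x. \<Sum>j\<in>{1..M}-A. \<bar>ln (\<sigma> x j / \<sigma>0 j)\<bar> * ((\<Sum>n\<in>{1..N}. a x n) + (\<Sum>n\<in>{1..N}. a0 n)))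
            \<longlongrightarrow> (\<Sum>j\<in>{1..M}-A. 0 * ((\<Sum>n\<in>{1..N}. a0 n) + (\<Sum>n\<in>{1..N}. a0 n)))) F"
        proof (rule tendsto_sum)
          fix j assume j: "j \<in> {1..M}-A"
          have "((\<lambda>x. \<sigma> x j / \<sigma>0 j) \<longlongrightarrow> \<sigma>0 j / \<sigma>0 j) F" using ts j by (intro tendsto_divide) (auto simp: s0nz)
          then have "((\<lambda>x. \<sigma> x j / \<sigma>0 j) \<longlongrightarrow> 1) F" using s0nz[OF j] by simp
          moreover have "((\<lambda>x. (\<Sum>n\<in>{1..N}. a x n) + (\<Sum>n\<in>{1..N}. a0 n)) \<longlongrightarrow> (\<Sum>n\<in>{1..N}. a0 n) + (\<Sum>n\<in>{1..N}. a0 n)) F"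
            using ta by (intro tendsto_add tendsto_sum tendsto_const) auto
          ultimately show "((\<lambda>x. \<bar>ln (\<sigma> x j / \<sigma>0 j)\<bar> * ((\<Sum>n\<in>{1..N}. a x n) + (\<Sum>n\<in>{1..N}. a0 n)))
            \<longlongrightarrow> 0 * ((\<Sum>n\<in>{1..N}. a0 n) + (\<Sum>n\<in>{1..N}. a0 n))) F"
            by (intro tendsto_mult abs_ln_tendsto)
        qed
        have "(U \<longlongrightarrow> (\<Sum>n\<in>{1..N}. a0 n * 0) + (\<Sum>j\<in>{1..M}-A. 0 * ((\<Sum>n\<in>{1..N}. a0 n) + (\<Sum>n\<in>{1..N}. a0 n)))) F"
          unfolding U_def by (rule tendsto_add[OF t1 t2])
        then show ?thesis by simp
      qed
      have Ug: "((\<lambda>x. U x / \<gamma> x) \<longlongrightarrow> 0 / \<gamma>0) F"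
        using Ut gt g0 by (intro tendsto_divide) auto
      have bnd: "eventually (\<lambda>x. 0 \<le> psi (S x m / T m) \<and> psi (S x m / T m) \<le> U x / \<gamma> x) F"
        using ev
      proof eventually_elim
        case (elim x)
        then have sx: "sol A (a x) (\<sigma> x) (S x)" and vx: "valid A (a x) (\<sigma> x)" by auto
        have Sb: "\<forall>j\<in>{1..M}. 0 < S x j \<and> S x j \<le> 1" using sol_bounds sx vx by blast
        have axp: "\<forall>n\<in>{1..N}. a x n > 0" using vx unfolding valid_def by auto
        have axn: "\<forall>n\<in>{1..N}. a x n \<ge> 0" using axp by (auto simp: less_imp_le)
        have axn1: "a x n > 0" using axp n(1) by blast
        have a0n: "\<forall>n\<in>{1..N}. a0 n \<ge> 0" using a0p by (auto simp: less_imp_le)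
        have st: "(\<Sum>n\<in>{1..N}. \<Sum>j\<in>set (route n). a x n * pp (S x) (route n) j * S x j * psi (S x j / T j))
           \<le> (\<Sum>n\<in>{1..N}. a0 n * Hf (a x n / a0 n))
             + (\<Sum>j\<in>{1..M}-A. ln (S x j / T j) * (S x j * load (a x) (S x) j - T j * load a0 T j))"
          by (rule stability[OF sx vx T AV])
        have sec: "(\<Sum>j\<in>{1..M}-A. ln (S x j / T j) * (S x j * load (a x) (S x) j - T j * load a0 T j))
           \<le> (\<Sum>j\<in>{1..M}-A. \<bar>ln (\<sigma> x j / \<sigma>0 j)\<bar> * ((\<Sum>n\<in>{1..N}. a x n) + (\<Sum>n\<in>{1..N}. a0 n)))"
        proof (rule sum_mono)
          fix j assume j: "j \<in> {1..M}-A"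
          have e1: "S x j = \<sigma> x j" "T j = \<sigma>0 j" using sx T(1) j by (auto simp: sol_def)
          have l1: "0 \<le> load (a x) (S x) j" "load (a x) (S x) j \<le> (\<Sum>n\<in>{1..N}. a x n)"
            using load_nonneg[OF axn Sb] load_le[OF axn Sb] by auto
          have l2: "0 \<le> load a0 T j" "load a0 T j \<le> (\<Sum>n\<in>{1..N}. a0 n)"
            using load_nonneg[OF a0n Tb] load_le[OF a0n Tb] by auto
          have sj: "0 < S x j" "S x j \<le> 1" "0 < T j" "T j \<le> 1" using Sb Tb j by auto
          have p1: "0 \<le> S x j * load (a x) (S x) j" "S x j * load (a x) (S x) j \<le> (\<Sum>n\<in>{1..N}. a x n)"
            using l1 sj mult_left_le_one_le[of "load (a x) (S x) j" "S x j"] by auto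
          have p2: "0 \<le> T j * load a0 T j" "T j * load a0 T j \<le> (\<Sum>n\<in>{1..N}. a0 n)"
            using l2 sj mult_left_le_one_le[of "load a0 T j" "T j"] by auto
          have "\<bar>S x j * load (a x) (S x) j - T j * load a0 T j\<bar> \<le> (\<Sum>n\<in>{1..N}. a x n) + (\<Sum>n\<in>{1..N}. a0 n)"
            using p1 p2 by linarith
          then have "ln (S x j / T j) * (S x j * load (a x) (S x) j - T j * load a0 T j)
              \<le> \<bar>ln (S x j / T j)\<bar> * ((\<Sum>n\<in>{1..N}. a x n) + (\<Sum>n\<in>{1..N}. a0 n))"
          proof -
            let ?l = "ln (S x j / T j)" and ?d = "S x j * load (a x) (S x) j - T j * load a0 T j"
            have "?l * ?d \<le> \<bar>?l * ?d\<bar>" by (rule abs_ge_self)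
            also have "\<dots> = \<bar>?l\<bar> * \<bar>?d\<bar>" by (rule abs_mult)
            also have "\<dots> \<le> \<bar>?l\<bar> * ((\<Sum>n\<in>{1..N}. a x n) + (\<Sum>n\<in>{1..N}. a0 n))"
              by (rule mult_left_mono) (use \<open>\<bar>?d\<bar> \<le> _\<close> in auto)
            finally show ?thesis .
          qed
          then show "ln (S x j / T j) * (S x j * load (a x) (S x) j - T j * load a0 T j)
              \<le> \<bar>ln (\<sigma> x j / \<sigma>0 j)\<bar> * ((\<Sum>n\<in>{1..N}. a x n) + (\<Sum>n\<in>{1..N}. a0 n))"
            using e1 by simp
        qed
        have tn: "\<And>n j. n \<in> {1..N} \<Longrightarrow> j \<in> set (route n) \<Longrightarrow> 0 \<le> a x n * pp (S x) (route n) j * S x j * psi (S x j / T j)"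
        proof -
          fix n j assume n: "n \<in> {1..N}" and j: "j \<in> set (route n)"
          then have "j \<in> {1..M}" using route_sub by blast
          then have "a x n > 0" "S x j > 0" "pp (S x) (route n) j > 0" "psi (S x j / T j) \<ge> 0"
            using axp n pp_bounds[OF n Sb, of j] Sb Tb psi_nonneg[of "S x j / T j"] by auto
          then show "0 \<le> a x n * pp (S x) (route n) j * S x j * psi (S x j / T j)" by simp
        qed
        have "a x n * pp (S x) (route n) m * S x m * psi (S x m / T m) \<le> (\<Sum>j\<in>set (route n). a x n * pp (S x) (route n) j * S x j * psi (S x j / T j))"
          by (rule member_le_sum) (use n tn in auto)
        also have "\<dots> \<le> (\<Sum>n\<in>{1..N}. \<Sum>j\<in>set (route n). a x n * pp (S x) (route n) j * S x j * psi (S x j / T j))"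
          by (rule member_le_sum[where f="\<lambda>n. \<Sum>j\<in>set (route n). a x n * pp (S x) (route n) j * S x j * psi (S x j / T j)"])
             (use n tn in \<open>auto intro: sum_nonneg\<close>)
        finally have tU: "a x n * pp (S x) (route n) m * S x m * psi (S x m / T m) \<le> U x"
          using st sec unfolding U_def by linarith
        have ps: "psi (S x m / T m) \<ge> 0" using psi_nonneg Sb Tb m by simp
        have gp: "\<gamma> x > 0" unfolding \<gamma>_def using axp n beta_pos[OF vx] m pre
          by (auto intro!: mult_pos_pos prod_pos)
        have "(\<Prod>j\<in>preW (route n) m. beta A (a x) (\<sigma> x) j) \<le> pp (S x) (route n) m"
          unfolding pp_def
        proof (rule prod_mono)
          fix j assume "j \<in> preW (route n) m"
          then have j: "j \<in> {1..M}" using pre by blast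
          show "0 \<le> beta A (a x) (\<sigma> x) j \<and> beta A (a x) (\<sigma> x) j \<le> S x j"
            using sol_lower[OF sx vx j] beta_pos[OF vx j] by simp
        qed
        then have "a x n * (\<Prod>j\<in>preW (route n) m. beta A (a x) (\<sigma> x) j) \<le> a x n * pp (S x) (route n) m"
          using axp n(1) by (intro mult_left_mono) (auto dest: bspec[where x=n])
        moreover have "beta A (a x) (\<sigma> x) m \<le> S x m" using sol_lower[OF sx vx m] .
        moreover have "0 \<le> a x n * pp (S x) (route n) m" using axn1 pp_bounds[OF n(1) Sb, of m] by simp
        moreover have "0 \<le> beta A (a x) (\<sigma> x) m" using beta_pos[OF vx m] by simp
        ultimately have "\<gamma> x \<le> a x n * pp (S x) (route n) m * S x m" unfolding \<gamma>_def
          by (rule mult_mono)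
        then have "\<gamma> x * psi (S x m / T m) \<le> U x" using tU ps
          by (meson mult_right_mono order_trans)
        then show ?case using ps gp by (simp add: pos_le_divide_eq mult.commute)
      qed
      have "((\<lambda>x. psi (S x m / T m)) \<longlongrightarrow> 0) F"
      proof (rule tendsto_sandwich[where f="\<lambda>x. 0" and h="\<lambda>x. U x / \<gamma> x"])
        show "eventually (\<lambda>x. 0 \<le> psi (S x m / T m)) F" using bnd by (rule eventually_mono) auto
        show "eventually (\<lambda>x. psi (S x m / T m) \<le> U x / \<gamma> x) F" using bnd by (rule eventually_mono) auto
      qed (use Ug in auto)
      moreover have "eventually (\<lambda>x. S x m / T m > 0) F"
        using ev by eventually_elim (use sol_bounds Tb m in \<open>auto\<close>)
      ultimately have q: "((\<lambda>x. S x m / T m) \<longlongrightarrow> 1) F" by (rule psi_tendsto_imp)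
      have "((\<lambda>x. S x m / T m * T m) \<longlongrightarrow> 1 * T m) F" by (intro tendsto_mult q tendsto_const)
      moreover have "T m > 0" using Tb m by blast
      ultimately show ?thesis by simp
    qed
  qed
qed

end




context net begin

lemma Fm_tendsto:
  assumes "\<forall>j\<in>{1..M}. ((\<lambda>x. S x j) \<longlongrightarrow> T j) F" "k \<in> {1..M}"
  shows "((\<lambda>x. Fm a (S x) k) \<longlongrightarrow> Fm a T k) F"
proof -
  have c: "C k > 0" using C_pos assms(2) by blast
  have l: "((\<lambda>x. load a (S x) k) \<longlongrightarrow> load a T k) F"
    unfolding load_def pp_def
  proof (intro tendsto_sum tendsto_mult tendsto_const tendsto_prod)
    fix n j assume "n \<in> classes_at N route k" "j \<in> preW (route n) k"
    then have "j \<in> {1..M}" using classes_at_sub preW_route_sub by blast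
    then show "((\<lambda>x. S x j) \<longlongrightarrow> T j) F" using assms(1) by blast
  qed
  have "((\<lambda>x. C k / max (C k) (load a (S x) k)) \<longlongrightarrow> C k / max (C k) (load a T k)) F"
    using c by (intro tendsto_divide tendsto_const tendsto_max l) (auto simp: max_def)
  then show ?thesis unfolding Fm_def .
qed

lemma existence:
  assumes "finite A" "A \<subseteq> {1..M}" "valid A a \<sigma>"
  shows "\<exists>S. sol A a \<sigma> S"
  using assms
proof (induction A arbitrary: \<sigma> rule: finite_induct)
  case empty
  then show ?case by (auto simp: sol_def)
next
  case (insert k A')
  have k: "k \<in> {1..M}" "k \<notin> A'" using insert by auto
  have A'V: "A' \<subseteq> {1..M}" using insert by auto
  have ap: "\<forall>n\<in>{1..N}. a n > 0" using insert.prems unfolding valid_def by auto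
  have an: "\<forall>n\<in>{1..N}. a n \<ge> 0" using ap by (auto simp: less_imp_le)
  have c: "C k > 0" using C_pos k by blast
  define lo where "lo = C k / max (C k) (\<Sum>n\<in>{1..N}. a n)"
  have lo: "0 < lo" "lo \<le> 1" unfolding lo_def using c by (auto simp: max_def)
  have vt: "valid A' a (\<sigma>(k:=t))" if "t \<in> {lo..1}" for t
    using insert.prems that lo k unfolding valid_def by auto
  define Sol where "Sol t = (SOME S. sol A' a (\<sigma>(k:=t)) S)" for t
  have Sol: "sol A' a (\<sigma>(k:=t)) (Sol t)" if "t \<in> {lo..1}" for t
    unfolding Sol_def using insert.IH[OF A'V vt[OF that]] by (rule someI_ex)
  define g where "g t = Fm a (Sol t) k - t" for t
  have cont: "continuous_on {lo..1} g"
    unfolding continuous_on_def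
  proof
    fix t0 assume t0: "t0 \<in> {lo..1}"
    let ?F = "at t0 within {lo..1}"
    have evin: "eventually (\<lambda>x. x \<in> {lo..1}) ?F" unfolding eventually_at_filter by simp
    have ev: "eventually (\<lambda>x. sol A' a (\<sigma>(k:=x)) (Sol x) \<and> valid A' a (\<sigma>(k:=x))) ?F"
      using evin by eventually_elim (use Sol vt in blast)
    have ts: "\<forall>j\<in>{1..M}-A'. ((\<lambda>x. (\<sigma>(k:=x)) j) \<longlongrightarrow> (\<sigma>(k:=t0)) j) ?F"
    proof
      fix j assume "j \<in> {1..M}-A'"
      show "((\<lambda>x. (\<sigma>(k:=x)) j) \<longlongrightarrow> (\<sigma>(k:=t0)) j) ?F"
      proof (cases "j = k")
        case True then show ?thesis by (simp add: tendsto_ident_at)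
      next
        case False then show ?thesis by simp
      qed
    qed
    have "\<forall>j\<in>{1..M}. ((\<lambda>x. Sol x j) \<longlongrightarrow> Sol t0 j) ?F"
    proof
      fix j assume j: "j \<in> {1..M}"
      show "((\<lambda>x. Sol x j) \<longlongrightarrow> Sol t0 j) ?F"
        by (rule cont_sol[OF A'V ev Sol[OF t0] vt[OF t0] _ ts j]) simp
    qed
    then have "((\<lambda>x. Fm a (Sol x) k) \<longlongrightarrow> Fm a (Sol t0) k) ?F" using k by (intro Fm_tendsto) auto
    then show "(g \<longlongrightarrow> g t0) ?F" unfolding g_def by (intro tendsto_diff tendsto_ident_at)
  qed
  have lo_in: "lo \<in> {lo..1}" and one_in: "1 \<in> {lo..1}" using lo by auto
  have g1: "g 1 \<le> 0" unfolding g_def using Fm_bounds[OF k(1)] by (simp add: less_imp_le)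
  have glo: "0 \<le> g lo"
  proof -
    have Sb: "\<forall>j\<in>{1..M}. 0 < Sol lo j \<and> Sol lo j \<le> 1" using sol_bounds Sol[OF lo_in] vt[OF lo_in] by blast
    have L: "load a (Sol lo) k \<le> (\<Sum>n\<in>{1..N}. a n)" using load_le[OF an Sb] .
    have "C k / max (C k) (\<Sum>n\<in>{1..N}. a n) \<le> C k / max (C k) (load a (Sol lo) k)"
      using c L by (intro divide_left_mono) (auto simp: max_def)
    then have "lo \<le> C k / max (C k) (load a (Sol lo) k)" by (simp only: lo_def)
    then show ?thesis unfolding g_def Fm_def by linarith
  qed
  obtain t where t: "lo \<le> t" "t \<le> 1" "g t = 0"
    using IVT2'[of g 1 0 lo, OF g1 glo lo(2) cont] by blast
  have tin: "t \<in> {lo..1}" using t by auto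
  have "sol (insert k A') a \<sigma> (Sol t)"
    unfolding sol_def
  proof
    fix m assume m: "m \<in> {1..M}"
    have sm: "Sol t m = (if m \<in> A' then Fm a (Sol t) m else (\<sigma>(k:=t)) m)"
      using Sol[OF tin] m unfolding sol_def by blast
    show "Sol t m = (if m \<in> insert k A' then Fm a (Sol t) m else \<sigma> m)"
    proof (cases "m = k")
      case True
      then show ?thesis using sm k t(3) unfolding g_def by auto
    next
      case False
      then show ?thesis using sm by auto
    qed
  qed
  then show ?case by blast
qed

end




lemma takeWhile_nth_distinct:
  "distinct xs \<Longrightarrow> i < length xs \<Longrightarrow> takeWhile (\<lambda>x. x \<noteq> xs!i) xs = take i xs"
proof (induction xs arbitrary: i)
  case Nil then show ?case by simp
next
  case (Cons x xs)
  show ?case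
  proof (cases i)
    case 0 then show ?thesis by simp
  next
    case (Suc i')
    then have "i' < length xs" using Cons.prems by simp
    then have "xs ! i' \<noteq> x" using Cons.prems by (metis distinct.simps(2) nth_mem)
    then show ?thesis using Suc Cons by simp
  qed
qed

lemma preW_nth: "distinct xs \<Longrightarrow> i < length xs \<Longrightarrow> preW xs (xs!i) = set (take i xs)"
  by (simp add: preW_def takeWhile_nth_distinct)

lemma pp_nth0: "distinct xs \<Longrightarrow> 0 < length xs \<Longrightarrow> pp S xs (xs!0) = 1"
  by (simp add: pp_def preW_nth)

lemma pp_nth_Suc:
  assumes "distinct xs" "Suc i < length xs"
  shows "pp S xs (xs!Suc i) = pp S xs (xs!i) * S (xs!i)"
proof -
  have "set (take (Suc i) xs) = insert (xs!i) (set (take i xs))"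
    using assms by (simp add: take_Suc_conv_app_nth)
  moreover have "xs!i \<notin> set (take i xs)"
  proof
    assume h: "xs!i \<in> set (take i xs)"
    have "xs!i \<in> set (drop i xs)" using assms Cons_nth_drop_Suc[of i xs]
      by (metis Suc_lessD list.set_intros(1))
    then show False using h set_take_disj_set_drop_if_distinct[OF assms(1), of i i] by blast
  qed
  ultimately show ?thesis using assms by (simp add: pp_def preW_nth mult.commute)
qed

lemma pred_node_nth:
  assumes "distinct (route n)" "i < length (route n)"
  shows "pred_node route n (route n ! i) = (if i = 0 then 0 else route n ! (i - 1))"
proof -
  have "(LEAST j. j < length (route n) \<and> route n ! j = route n ! i) = i"
  proof (rule Least_equality)
    show "i < length (route n) \<and> route n ! i = route n ! i" using assms by simp
    fix j assume "j < length (route n) \<and> route n ! j = route n ! i"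
    then have "j = i" using assms nth_eq_iff_index_eq by blast
    then show "i \<le> j" by simp
  qed
  then show ?thesis unfolding pred_node_def Let_def by simp
qed

context net begin

definition aJ :: "(nat \<Rightarrow> nat) \<Rightarrow> (nat \<Rightarrow> real) \<Rightarrow> (nat \<Rightarrow> real) \<Rightarrow> nat \<Rightarrow> real" where
  "aJ J r \<rho> n = real (J n) * r n + \<rho> n"

definition mkR :: "(nat \<Rightarrow> real) \<Rightarrow> (nat \<Rightarrow> real) \<Rightarrow> nat \<Rightarrow> nat \<Rightarrow> real" where
  "mkR S r n m = (if n \<in> {1..N} \<and> m \<in> {1..M} \<and> m \<in> set (route n) then r n * pp S (route n) m else 0)"

lemma mkR_cong:
  assumes "\<forall>j\<in>{1..M}. S j = S' j"
  shows "mkR S r = mkR S' r"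
proof (intro ext)
  fix n m
  show "mkR S r n m = mkR S' r n m"
  proof (cases "n \<in> {1..N}")
    case True
    then have "pp S (route n) m = pp S' (route n) m"
      unfolding pp_def using preW_route_sub[OF True] assms by (intro prod.cong) auto
    then show ?thesis unfolding mkR_def by simp
  qed (auto simp: mkR_def)
qed

lemma valid_aJ:
  assumes "\<forall>n\<in>{1..N}. r n > 0 \<and> \<rho> n > 0"
  shows "valid {1..M} (aJ J r \<rho>) \<sigma>"
  unfolding valid_def aJ_def using assms
  by (auto intro!: add_nonneg_pos mult_nonneg_nonneg simp: less_imp_le)

lemma Sfac_mkR: "S_fac N route C J (mkR S r) (mkR S \<rho>) m = Fm (aJ J r \<rho>) S m"
proof -
  have "(\<Sum>n\<in>classes_at N route m. real (J n) * mkR S r n m + mkR S \<rho> n m) = load (aJ J r \<rho>) S m"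
    unfolding load_def
  proof (rule sum.cong[OF refl])
    fix n assume n: "n \<in> classes_at N route m"
    then have "n \<in> {1..N}" "m \<in> set (route n)" unfolding classes_at_def by auto
    moreover then have "m \<in> {1..M}" using route_sub by blast
    ultimately show "real (J n) * mkR S r n m + mkR S \<rho> n m = aJ J r \<rho> n * pp S (route n) m"
      unfolding mkR_def aJ_def by (simp add: algebra_simps)
  qed
  then show ?thesis unfolding S_fac_def Fm_def by simp
qed

lemma sol_is:
  assumes "sol {1..M} (aJ J r \<rho>) \<sigma> S"
  shows "is_solution M N route C r \<rho> J (mkR S r, mkR S \<rho>)"
proof -
  let ?S = "S_fac N route C J (mkR S r) (mkR S \<rho>)"
  have SS: "?S j = S j" if "j \<in> {1..M}" for j
    using assms that unfolding Sfac_mkR sol_def by simp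
  have main: "mkR S f n m = (if n \<notin> classes_at N route m then 0
                  else if pred_node route n m = 0 then f n
                  else mkR S f n (pred_node route n m) * ?S (pred_node route n m))"
    if n: "n \<in> {1..N}" and m: "m \<in> {1..M}" for n m and f :: "nat \<Rightarrow> real"
  proof (cases "n \<in> classes_at N route m")
    case False
    then have "m \<notin> set (route n)" using n unfolding classes_at_def by auto
    then show ?thesis using False unfolding mkR_def by simp
  next
    case True
    then have ms: "m \<in> set (route n)" unfolding classes_at_def by auto
    then obtain i where i: "i < length (route n)" "route n ! i = m" by (metis in_set_conv_nth)
    have d: "distinct (route n)" using route_distinct n by blast
    show ?thesis
    proof (cases i)
      case 0
      then have "pred_node route n m = 0" using pred_node_nth[of route n i, OF d i(1)] i by simp
      moreover have "pp S (route n) m = 1" using pp_nth0[OF d] i 0 by auto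
      ultimately show ?thesis using True n m ms unfolding mkR_def by simp
    next
      case (Suc i')
      define p where "p = route n ! i'"
      have pn: "pred_node route n m = p" using pred_node_nth[of route n i, OF d i(1)] i Suc p_def by simp
      have ps: "p \<in> set (route n)" using i Suc p_def by simp
      then have pV: "p \<in> {1..M}" using route_sub n by blast
      then have p0: "p \<noteq> 0" by simp
      have "pp S (route n) m = pp S (route n) p * S p"
        using pp_nth_Suc[OF d, of i' S] i Suc p_def by simp
      then show ?thesis using True n m ms pn p0 ps pV SS[OF pV] unfolding mkR_def by simp
    qed
  qed
  show ?thesis
    unfolding is_solution_def Let_def fst_conv snd_conv
  proof (intro conjI allI impI ballI)
    fix n m assume "n \<notin> {1..N} \<or> m \<notin> {1..M}"
    then show "mkR S r n m = 0" "mkR S \<rho> n m = 0" unfolding mkR_def by auto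
  next
    fix n m assume "n \<in> {1..N}" "m \<in> {1..M}"
    then show "mkR S r n m = (if n \<notin> classes_at N route m then 0
                  else if pred_node route n m = 0 then r n
                  else mkR S r n (pred_node route n m) * ?S (pred_node route n m))"
      "mkR S \<rho> n m = (if n \<notin> classes_at N route m then 0
                  else if pred_node route n m = 0 then \<rho> n
                  else mkR S \<rho> n (pred_node route n m) * ?S (pred_node route n m))"
      using main by blast+
  qed
qed

lemma rec_mkR:
  assumes H0: "\<forall>n m. (n \<notin> {1..N} \<or> m \<notin> {1..M}) \<longrightarrow> X n m = 0"
    and H1: "\<forall>n\<in>{1..N}. \<forall>m\<in>{1..M}. X n m = (if n \<notin> classes_at N route m then 0
                  else if pred_node route n m = 0 then x n
                  else X n (pred_node route n m) * S (pred_node route n m))"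
  shows "X = mkR S x"
proof (intro ext)
  fix n m
  have key: "\<forall>i<length (route n). X n (route n ! i) = x n * pp S (route n) (route n ! i)"
    if n: "n \<in> {1..N}"
  proof (intro allI impI)
    fix i assume "i < length (route n)"
    then show "X n (route n ! i) = x n * pp S (route n) (route n ! i)"
    proof (induction i)
      case 0
      have d: "distinct (route n)" using route_distinct n by blast
      have m: "route n ! 0 \<in> set (route n)" using 0 by simp
      then have mV: "route n ! 0 \<in> {1..M}" using route_sub n by blast
      have cl: "n \<in> classes_at N route (route n ! 0)" using m n unfolding classes_at_def by auto
      have "pred_node route n (route n ! 0) = 0" using pred_node_nth[of route n 0, OF d 0] by simp
      then show ?case using H1 n mV cl pp_nth0[OF d, of S] 0 by simp
    next
      case (Suc i)
      have d: "distinct (route n)" using route_distinct n by blast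
      have m: "route n ! Suc i \<in> set (route n)" using Suc by simp
      then have mV: "route n ! Suc i \<in> {1..M}" using route_sub n by blast
      have cl: "n \<in> classes_at N route (route n ! Suc i)" using m n unfolding classes_at_def by auto
      have pn: "pred_node route n (route n ! Suc i) = route n ! i" using pred_node_nth[of route n "Suc i", OF d Suc.prems] by simp
      have "route n ! i \<in> set (route n)" using Suc.prems by simp
      then have p0: "route n ! i \<noteq> 0" using route_sub n by fastforce
      have IH: "X n (route n ! i) = x n * pp S (route n) (route n ! i)" using Suc by simp
      show ?case using H1 n mV cl pn p0 IH pp_nth_Suc[OF d Suc.prems, of S] by simp
    qed
  qed
  show "X n m = mkR S x n m"
  proof (cases "n \<in> {1..N} \<and> m \<in> {1..M}")
    case False then show ?thesis using H0 unfolding mkR_def by auto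
  next
    case True
    show ?thesis
    proof (cases "m \<in> set (route n)")
      case True': True
      then obtain i where i: "i < length (route n)" "route n ! i = m" by (metis in_set_conv_nth)
      then show ?thesis using key True True' unfolding mkR_def by auto
    next
      case False
      then have "n \<notin> classes_at N route m" unfolding classes_at_def by auto
      then show ?thesis using H1 True False unfolding mkR_def by auto
    qed
  qed
qed

lemma is_sol:
  assumes "is_solution M N route C r \<rho> J (R, P)"
  shows "R = mkR (S_fac N route C J R P) r \<and> P = mkR (S_fac N route C J R P) \<rho>
     \<and> sol {1..M} (aJ J r \<rho>) \<sigma> (S_fac N route C J R P)"
proof -
  let ?S = "S_fac N route C J R P"
  have h: "(\<forall>n m. (n \<notin> {1..N} \<or> m \<notin> {1..M}) \<longrightarrow> R n m = 0 \<and> P n m = 0) \<and>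
      (\<forall>n\<in>{1..N}. \<forall>m\<in>{1..M}.
         R n m = (if n \<notin> classes_at N route m then 0
                  else if pred_node route n m = 0 then r n
                  else R n (pred_node route n m) * ?S (pred_node route n m)) \<and>
         P n m = (if n \<notin> classes_at N route m then 0
                  else if pred_node route n m = 0 then \<rho> n
                  else P n (pred_node route n m) * ?S (pred_node route n m)))"
    using assms unfolding is_solution_def Let_def by simp
  have R: "R = mkR ?S r" by (rule rec_mkR) (use h in blast)+
  have P: "P = mkR ?S \<rho>" by (rule rec_mkR) (use h in blast)+
  have "sol {1..M} (aJ J r \<rho>) \<sigma> ?S"
    unfolding sol_def
  proof
    fix m assume "m \<in> {1..M}"
    have "?S m = S_fac N route C J (mkR ?S r) (mkR ?S \<rho>) m" using R P by simp
    also have "\<dots> = Fm (aJ J r \<rho>) ?S m" by (rule Sfac_mkR)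
    finally show "?S m = (if m \<in> {1..M} then Fm (aJ J r \<rho>) ?S m else \<sigma> m)" using \<open>m \<in> {1..M}\<close> by simp
  qed
  then show ?thesis using R P by blast
qed

end




lemma coord_tendsto:
  "((\<lambda>p::(nat \<Rightarrow> real) \<times> (nat \<Rightarrow> real). fst p n) \<longlongrightarrow> fst p0 n) (at p0 within D)"
  "((\<lambda>p::(nat \<Rightarrow> real) \<times> (nat \<Rightarrow> real). snd p n) \<longlongrightarrow> snd p0 n) (at p0 within D)"
proof -
  have c1: "continuous_on UNIV (\<lambda>p::(nat \<Rightarrow> real) \<times> (nat \<Rightarrow> real). fst p n)"
    by (rule continuous_on_compose2[OF continuous_on_product_coordinates continuous_on_fst[OF continuous_on_id]]) auto
  have c2: "continuous_on UNIV (\<lambda>p::(nat \<Rightarrow> real) \<times> (nat \<Rightarrow> real). snd p n)"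
    by (rule continuous_on_compose2[OF continuous_on_product_coordinates continuous_on_snd[OF continuous_on_id]]) auto
  show "((\<lambda>p::(nat \<Rightarrow> real) \<times> (nat \<Rightarrow> real). fst p n) \<longlongrightarrow> fst p0 n) (at p0 within D)"
    using c1 unfolding continuous_on_def by (meson UNIV_I subset_UNIV tendsto_within_subset)
  show "((\<lambda>p::(nat \<Rightarrow> real) \<times> (nat \<Rightarrow> real). snd p n) \<longlongrightarrow> snd p0 n) (at p0 within D)"
    using c2 unfolding continuous_on_def by (meson UNIV_I subset_UNIV tendsto_within_subset)
qed

context net begin

lemma ex_fixed:
  assumes "\<forall>n\<in>{1..N}. r n > 0 \<and> \<rho> n > 0"
  shows "\<exists>S. sol {1..M} (aJ J r \<rho>) (\<lambda>_. 1) S"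
  by (rule existence) (use valid_aJ[OF assms] in auto)

lemma the_sol:
  assumes pos: "\<forall>n\<in>{1..N}. r n > 0 \<and> \<rho> n > 0" and S: "sol {1..M} (aJ J r \<rho>) (\<lambda>_. 1) S"
  shows "is_solution M N route C r \<rho> J sol' \<longleftrightarrow> sol' = (mkR S r, mkR S \<rho>)"
proof
  assume h: "is_solution M N route C r \<rho> J sol'"
  obtain R P where sp: "sol' = (R, P)" by fastforce
  let ?S = "S_fac N route C J R P"
  have i: "R = mkR ?S r \<and> P = mkR ?S \<rho> \<and> sol {1..M} (aJ J r \<rho>) (\<lambda>_. 1) ?S"
    using is_sol h sp by blast
  have "\<forall>m\<in>{1..M}. ?S m = S m"
    using uniqueness[of "{1..M}" "aJ J r \<rho>" "\<lambda>_. 1" ?S S] i S valid_aJ[OF pos] by blast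
  then have "mkR ?S r = mkR S r" "mkR ?S \<rho> = mkR S \<rho>" by (auto intro: mkR_cong)
  then show "sol' = (mkR S r, mkR S \<rho>)" using i sp by simp
next
  assume "sol' = (mkR S r, mkR S \<rho>)"
  then show "is_solution M N route C r \<rho> J sol'" using sol_is[OF S] by simp
qed

definition S0 :: "(nat \<Rightarrow> nat) \<Rightarrow> (nat \<Rightarrow> real) \<times> (nat \<Rightarrow> real) \<Rightarrow> nat \<Rightarrow> real" where
  "S0 J p = (SOME S. sol {1..M} (aJ J (fst p) (snd p)) (\<lambda>_. 1) S)"

lemma S0_sol:
  assumes "p \<in> {(r, \<rho>). \<forall>n\<in>{1..N}. r n > 0 \<and> \<rho> n > 0}"
  shows "sol {1..M} (aJ J (fst p) (snd p)) (\<lambda>_. 1) (S0 J p)"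
proof -
  have pos: "\<forall>n\<in>{1..N}. fst p n > 0 \<and> snd p n > 0" using assms by auto
  show ?thesis unfolding S0_def using ex_fixed[OF pos] by (rule someI_ex)
qed

lemma THE_eq:
  assumes "p \<in> {(r, \<rho>). \<forall>n\<in>{1..N}. r n > 0 \<and> \<rho> n > 0}"
  shows "(THE sol. is_solution M N route C (fst p) (snd p) J sol) = (mkR (S0 J p) (fst p), mkR (S0 J p) (snd p))"
proof -
  have pos: "\<forall>n\<in>{1..N}. fst p n > 0 \<and> snd p n > 0" using assms by auto
  show ?thesis using the_sol[OF pos S0_sol[OF assms]] by simp
qed

lemma cont_mkR:
  fixes g :: "(nat \<Rightarrow> real) \<times> (nat \<Rightarrow> real) \<Rightarrow> nat \<Rightarrow> real"
  assumes gt: "\<And>p0 D. ((\<lambda>p. g p n) \<longlongrightarrow> g p0 n) (at p0 within D)"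
  shows "continuous_on {(r, \<rho>). \<forall>n\<in>{1..N}. r n > 0 \<and> \<rho> n > 0} (\<lambda>p. mkR (S0 J p) (g p) n m)"
proof (cases "n \<in> {1..N} \<and> m \<in> {1..M} \<and> m \<in> set (route n)")
  case False
  then have "\<And>p. mkR (S0 J p) (g p) n m = 0" unfolding mkR_def by auto
  then show ?thesis by simp
next
  case True
  let ?D = "{(r, \<rho>). \<forall>n\<in>{1..N}. r n > 0 \<and> \<rho> n > 0} :: ((nat \<Rightarrow> real) \<times> (nat \<Rightarrow> real)) set"
  show ?thesis
    unfolding continuous_on_def
  proof
    fix p0 assume p0: "p0 \<in> ?D"
    let ?F = "at p0 within ?D"
    have evin: "eventually (\<lambda>x. x \<in> ?D) ?F" unfolding eventually_at_filter by simp
    have ev: "eventually (\<lambda>p. sol {1..M} (aJ J (fst p) (snd p)) (\<lambda>_. 1) (S0 J p)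
              \<and> valid {1..M} (aJ J (fst p) (snd p)) (\<lambda>_. 1)) ?F"
      using evin
    proof eventually_elim
      case (elim p)
      then show ?case using S0_sol[OF elim] valid_aJ[of "fst p" "snd p"] by auto
    qed
    have ta: "\<forall>n\<in>{1..N}. ((\<lambda>p. aJ J (fst p) (snd p) n) \<longlongrightarrow> aJ J (fst p0) (snd p0) n) ?F"
      unfolding aJ_def by (intro ballI tendsto_add tendsto_mult tendsto_const coord_tendsto)
    have T: "sol {1..M} (aJ J (fst p0) (snd p0)) (\<lambda>_. 1) (S0 J p0)"
      "valid {1..M} (aJ J (fst p0) (snd p0)) (\<lambda>_. 1)"
      using S0_sol[OF p0] valid_aJ p0 by auto
    have cs: "((\<lambda>p. S0 J p j) \<longlongrightarrow> S0 J p0 j) ?F" if "j \<in> {1..M}" for j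
      by (rule cont_sol[OF _ ev T ta _ that]) auto
    have "((\<lambda>p. g p n * pp (S0 J p) (route n) m) \<longlongrightarrow> g p0 n * pp (S0 J p0) (route n) m) ?F"
      unfolding pp_def
    proof (intro tendsto_mult gt tendsto_prod)
      fix j assume "j \<in> preW (route n) m"
      then have "j \<in> {1..M}" using preW_route_sub True by blast
      then show "((\<lambda>p. S0 J p j) \<longlongrightarrow> S0 J p0 j) ?F" by (rule cs)
    qed
    then show "((\<lambda>p. mkR (S0 J p) (g p) n m) \<longlongrightarrow> mkR (S0 J p0) (g p0) n m) ?F"
      using True unfolding mkR_def by simp
  qed
qed

end

theorem mainTheorem2:
  fixes M N :: nat and route :: "nat \<Rightarrow> nat list" and C :: "nat \<Rightarrow> real"
    and J :: "nat \<Rightarrow> nat"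
  assumes C_pos: "\<forall>m\<in>{1..M}. C m > 0"
    and routes: "\<forall>n\<in>{1..N}. route n \<noteq> [] \<and> distinct (route n) \<and> set (route n) \<subseteq> {1..M}"
  shows "(\<forall>r \<rho>. (\<forall>n\<in>{1..N}. r n > 0 \<and> \<rho> n > 0) \<longrightarrow>
            (\<exists>!sol. is_solution M N route C r \<rho> J sol))
       \<and> (\<forall>n m. continuous_on {(r, \<rho>). \<forall>n\<in>{1..N}. r n > 0 \<and> \<rho> n > 0}
             (\<lambda>(r, \<rho>). fst (THE sol. is_solution M N route C r \<rho> J sol) n m)
           \<and> continuous_on {(r, \<rho>). \<forall>n\<in>{1..N}. r n > 0 \<and> \<rho> n > 0}
             (\<lambda>(r, \<rho>). snd (THE sol. is_solution M N route C r \<rho> J sol) n m))"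
proof -
  interpret net M N route C using assms by unfold_locales
  let ?D = "{(r, \<rho>). \<forall>n\<in>{1..N}. r n > 0 \<and> \<rho> n > 0} :: ((nat \<Rightarrow> real) \<times> (nat \<Rightarrow> real)) set"
  have P1: "\<forall>r \<rho>. (\<forall>n\<in>{1..N}. r n > 0 \<and> \<rho> n > 0) \<longrightarrow> (\<exists>!sol. is_solution M N route C r \<rho> J sol)"
  proof (intro allI impI)
    fix r \<rho> :: "nat \<Rightarrow> real" assume pos: "\<forall>n\<in>{1..N}. r n > 0 \<and> \<rho> n > 0"
    obtain S where S: "sol {1..M} (aJ J r \<rho>) (\<lambda>_. 1) S" using ex_fixed[OF pos] by blast
    show "\<exists>!sol. is_solution M N route C r \<rho> J sol"
      using the_sol[OF pos S] by (intro ex1I[of _ "(mkR S r, mkR S \<rho>)"]) auto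
  qed
  have P2: "continuous_on ?D (\<lambda>(r, \<rho>). fst (THE sol. is_solution M N route C r \<rho> J sol) n m)
         \<and> continuous_on ?D (\<lambda>(r, \<rho>). snd (THE sol. is_solution M N route C r \<rho> J sol) n m)" for n m
  proof
    have eqs: "(\<lambda>(r, \<rho>). fst (THE sol. is_solution M N route C r \<rho> J sol) n m) p = mkR (S0 J p) (fst p) n m
      \<and> (\<lambda>(r, \<rho>). snd (THE sol. is_solution M N route C r \<rho> J sol) n m) p = mkR (S0 J p) (snd p) n m"
      if "p \<in> ?D" for p
    proof -
      obtain a b where p: "p = (a, b)" by fastforce
      show ?thesis using THE_eq[OF that] unfolding p by simp
    qed
    have "continuous_on ?D (\<lambda>p. mkR (S0 J p) (fst p) n m)"
      by (rule cont_mkR) (rule coord_tendsto)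
    then show "continuous_on ?D (\<lambda>(r, \<rho>). fst (THE sol. is_solution M N route C r \<rho> J sol) n m)"
      by (rule continuous_on_cong[THEN iffD1, rotated 2]) (use eqs in auto)
    have "continuous_on ?D (\<lambda>p. mkR (S0 J p) (snd p) n m)"
      by (rule cont_mkR) (rule coord_tendsto)
    then show "continuous_on ?D (\<lambda>(r, \<rho>). snd (THE sol. is_solution M N route C r \<rho> J sol) n m)"
      by (rule continuous_on_cong[THEN iffD1, rotated 2]) (use eqs in auto)
  qed
  show ?thesis using P1 P2 by blast
qed



end
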